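(* Assume $s\ge1$, and let $a\in(0,1)$, $r\ge1$. Let $Y_1,\dots,Y_n$ be i.i.d. with the mixture distribution $\tfrac12 N(\theta^*,\sigma^2I_d)+\tfrac12 N(-\theta^*,\sigma^2I_d)$, let $\hat T:=\frac1n\sum_{i=1}^n(\|Y_i\|^2-d\sigma^2)$ and $\hat T_+:=\max\{\hat T,0\}$, and, conditionally on $Y_1,\dots,Y_n$, let $\theta_0\sim N\big(0,(\hat T_++\sigma^2/2)I_d\big)$. Let $E:=\{|\hat T-\|\theta^*\|^2|<\sigma^2/2\}$. Then $$\mathbb{P}\big(\theta_0\in\tilde{\mathcal{D}}_{a,r}\big)\ge\big[2\Phi(-a)-\mathbb{P}(\chi^2_d>r^2/2)\big]\,\mathbb{P}(E),$$ where $\Phi$ is the standard normal cdf and $\chi^2_d$ a chi-square variable with $d$ degrees of freedom.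
   Context: Fix $d\ge1$, $\sigma>0$ and $\theta^*\in\mathbb{R}^d\setminus\{0\}$; $s:=\|\theta^*\|/\sigma$. For $a\in(0,1)$ and $r\ge1$, let $\tilde{\mathcal{D}}_{a,r}:=\{\theta\in\mathbb{R}^d:\ |\langle\theta,\theta^*\rangle|\ge a\|\theta^*\|^2\ \text{and}\ \|\theta\|\le r\|\theta^*\|\}$. The probability on the left is with respect to the joint law of $(Y_1,\dots,Y_n,\theta_0)$. *)

theory Defs
  imports "HOL-Probability.Probability"
begin

definition iso_gauss_density :: "'a::euclidean_space \<Rightarrow> real \<Rightarrow> 'a \<Rightarrow> real" where
  "iso_gauss_density mu v x =
     (2 * pi * v) powr (- real DIM('a) / 2) * exp (- (norm (x - mu))\<^sup>2 / (2 * v))"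

definition iso_gauss :: "'a::euclidean_space \<Rightarrow> real \<Rightarrow> 'a measure" where
  "iso_gauss mu v = density lborel (\<lambda>x. ennreal (iso_gauss_density mu v x))"

definition sym_mixture :: "'a::euclidean_space \<Rightarrow> real \<Rightarrow> 'a measure" where
  "sym_mixture theta sg = density lborel (\<lambda>x. ennreal
      (1/2 * iso_gauss_density theta (sg\<^sup>2) x + 1/2 * iso_gauss_density (- theta) (sg\<^sup>2) x))"

text \<open>Law of the sample (Y_0,...,Y_{n-1}), i.i.d. from the mixture.\<close>
definition sample_law :: "nat \<Rightarrow> 'a::euclidean_space \<Rightarrow> real \<Rightarrow> (nat \<Rightarrow> 'a) measure" where
  "sample_law n theta sg = PiM {..<n} (\<lambda>_. sym_mixture theta sg)"

definition T_hat :: "nat \<Rightarrow> real \<Rightarrow> (nat \<Rightarrow> 'a::euclidean_space) \<Rightarrow> real" where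
  "T_hat n sg Y = (1 / real n) * (\<Sum>i<n. (norm (Y i))\<^sup>2 - real DIM('a) * sg\<^sup>2)"

definition T_hat_plus :: "nat \<Rightarrow> real \<Rightarrow> (nat \<Rightarrow> 'a::euclidean_space) \<Rightarrow> real" where
  "T_hat_plus n sg Y = max (T_hat n sg Y) 0"

text \<open>Marginal law of theta_0, where conditionally on Y,
  theta_0 ~ N(0, (T_hat_plus + sg^2/2) I_d).\<close>
definition theta0_law :: "nat \<Rightarrow> 'a::euclidean_space \<Rightarrow> real \<Rightarrow> 'a measure" where
  "theta0_law n theta sg =
     bind (sample_law n theta sg) (\<lambda>Y. iso_gauss 0 (T_hat_plus n sg Y + sg\<^sup>2 / 2))"

definition D_tilde :: "'a::euclidean_space \<Rightarrow> real \<Rightarrow> real \<Rightarrow> 'a set" where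
  "D_tilde theta a r = {x. \<bar>x \<bullet> theta\<bar> \<ge> a * (norm theta)\<^sup>2 \<and> norm x \<le> r * norm theta}"

definition Phi :: "real \<Rightarrow> real" where
  "Phi x = cdf (density lborel (\<lambda>t. ennreal (std_normal_density t))) x"

definition chi2_density :: "nat \<Rightarrow> real \<Rightarrow> real" where
  "chi2_density k x = (if x > 0 then
      x powr (real k / 2 - 1) * exp (- x / 2) / (2 powr (real k / 2) * Gamma (real k / 2)) else 0)"

definition chi2 :: "nat \<Rightarrow> real measure" where
  "chi2 k = density lborel (\<lambda>x. ennreal (chi2_density k x))"

end

theory Submission
  imports Defs
begin


lemma distr_norm_lborel:
  defines "d \<equiv> DIM('a::euclidean_space)"
  shows "distr (lborel::'a measure) borel norm =
    density lborel (\<lambda>\<rho>. ennreal (indicator {0..} \<rho> * (unit_ball_vol d * real d * \<rho> ^ (d - 1))))"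
    (is "?M = ?N")
proof (rule measure_eqI_generator_eq[where E="range lessThan" and \<Omega>=UNIV and A="\<lambda>i. {..< real i}"])
  show "Int_stable (range lessThan :: real set set)"
  proof (rule Int_stableI)
    fix A B :: "real set" assume "A \<in> range lessThan" "B \<in> range lessThan"
    then obtain a b where "A = {..<a}" "B = {..<b}" by auto
    then have "A \<inter> B = {..<min a b}" by auto
    then show "A \<inter> B \<in> range lessThan" by auto
  qed
  show "range lessThan \<subseteq> Pow (UNIV::real set)" by auto
  have sb: "sets (borel::real measure) = sigma_sets UNIV (range lessThan)"
    by (subst borel_Iio) simp
  show "sets ?M = sigma_sets UNIV (range lessThan)"
    using sb by simp
  show "sets ?N = sigma_sets UNIV (range lessThan)"
    using sb by simp
  show "range (\<lambda>i. {..< real i}) \<subseteq> range lessThan" by auto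
  show "(\<Union>i. {..< real i}) = UNIV" by (auto intro: reals_Archimedean2)
  have d1: "d \<ge> 1" unfolding d_def by (simp add: DIM_positive Suc_leI)
  have key: "emeasure ?M {..<x} = emeasure ?N {..<x}" for x :: real
  proof (cases "x > 0")
    case True
    have "emeasure ?M {..<x} = emeasure lborel (ball (0::'a) x)"
      by (subst emeasure_distr) (auto intro!: arg_cong2[where f=emeasure] simp: ball_def)
    also have "\<dots> = ennreal (unit_ball_vol d * x ^ d)"
      using True emeasure_ball[of x "0::'a"] by (simp add: d_def)
    also have "\<dots> = (\<integral>\<^sup>+\<rho>. ennreal (unit_ball_vol d * real d * \<rho> ^ (d - 1)) * indicator {0..x} \<rho> \<partial>lborel)"
    proof (subst nn_integral_FTC_Icc[where F="\<lambda>\<rho>. unit_ball_vol d * \<rho> ^ d"])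
      fix \<rho> :: real assume "\<rho> \<in> {0..x}"
      show "((\<lambda>\<rho>. unit_ball_vol d * \<rho> ^ d) has_real_derivative unit_ball_vol d * real d * \<rho> ^ (d - 1)) (at \<rho>)"
        by (auto intro!: derivative_eq_intros)
      show "0 \<le> unit_ball_vol d * real d * \<rho> ^ (d - 1)"
        using \<open>\<rho> \<in> {0..x}\<close> by auto
    qed (use True d1 in auto)
    also have "\<dots> = emeasure ?N {..<x}"
    proof -
      have "AE \<rho> in lborel. \<rho> \<noteq> x" by (rule AE_lborel_singleton)
      then show ?thesis
        by (subst emeasure_density) (auto intro!: nn_integral_cong_AE split: split_indicator)
    qed
    finally show ?thesis .
  next
    case False
    have "emeasure ?M {..<x} = 0"
    proof -
      have "norm -` {..<x} = ({}::'a set)" using False by (auto simp: not_less) (meson norm_ge_zero order.trans linorder_not_less)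
      then show ?thesis by (subst emeasure_distr) auto
    qed
    moreover have "emeasure ?N {..<x} = 0"
      using False by (subst emeasure_density) (auto intro!: nn_integral_zero' split: split_indicator)
    ultimately show ?thesis by simp
  qed
  then show "\<And>X. X \<in> range lessThan \<Longrightarrow> emeasure ?M X = emeasure ?N X" by auto
  show "emeasure ?M {..< real i} \<noteq> \<infinity>" for i
  proof -
    have "emeasure ?M {..< real i} = emeasure lborel (norm -` {..<real i} :: 'a set)"
      by (subst emeasure_distr) auto
    also have "\<dots> \<le> emeasure lborel (ball (0::'a) (real i))"
      by (intro emeasure_mono) (auto simp: ball_def)
    also have "\<dots> < \<infinity>" by (simp add: emeasure_ball)
    finally show ?thesis by simp
  qed
qed

lemma chi2_subst_identity:
  fixes d :: nat and v \<rho> :: real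
  assumes d: "d \<ge> 1" and v: "v > 0" and \<rho>: "\<rho> > 0"
  shows "(\<rho>\<^sup>2 / v) powr (real d / 2 - 1) * exp (- (\<rho>\<^sup>2 / v) / 2) / (2 powr (real d / 2) * Gamma (real d / 2)) * (2 * \<rho> / v)
       = unit_ball_vol d * real d * \<rho> ^ (d - 1) * ((2 * pi * v) powr (- real d / 2) * exp (- \<rho>\<^sup>2 / (2 * v)))"
proof -
  define p where "p = real d / 2"
  have p: "p > 0" using d by (simp add: p_def)
  have G: "Gamma (p + 1) = p * Gamma p"
    using p by (intro Gamma_plus1) (auto simp: nonpos_Ints_def)
  have Gp: "Gamma p > 0" using p by simp
  have e: "exp (- (\<rho>\<^sup>2 / v) / 2) = exp (- \<rho>\<^sup>2 / (2 * v))" by (simp add: field_simps)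
  have A1: "(\<rho>\<^sup>2 / v) powr (p - 1) = \<rho> powr (2 * p - 2) / v powr (p - 1)"
  proof -
    have "\<rho>\<^sup>2 = \<rho> powr 2" using \<rho> by (simp add: powr_realpow)
    then show ?thesis by (simp add: powr_divide powr_powr \<rho> v algebra_simps)
  qed
  have A2: "\<rho> powr (2 * p - 2) * \<rho> = \<rho> ^ (d - 1)"
  proof -
    have "\<rho> powr (2 * p - 2) * \<rho> = \<rho> powr (2 * p - 2) * \<rho> powr 1" using \<rho> by simp
    also have "\<dots> = \<rho> powr (2 * p - 2 + 1)" by (simp only: powr_add)
    also have "\<dots> = \<rho> powr (2 * p - 1)" by simp
    also have "2 * p - 1 = real (d - 1)" using d by (simp add: p_def of_nat_diff)
    also have "\<rho> powr real (d - 1) = \<rho> ^ (d - 1)" using \<rho> by (simp add: powr_realpow)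
    finally show ?thesis .
  qed
  have A3: "v powr (p - 1) * v = v powr p"
  proof -
    have "v powr (p - 1) * v = v powr (p - 1) * v powr 1" using v by simp
    also have "\<dots> = v powr (p - 1 + 1)" by (simp only: powr_add)
    also have "\<dots> = v powr p" by simp
    finally show ?thesis .
  qed
  have A4: "(2 * pi * v) powr (- p) = 1 / (2 powr p * pi powr p * v powr p)"
    by (simp add: powr_minus powr_mult divide_inverse)
  have vp: "v powr p > 0" using v by simp
  have pp: "pi powr p > 0" by simp
  have tp: "2 powr p > 0" by simp
  have "unit_ball_vol d = pi powr p / (p * Gamma p)"
    unfolding unit_ball_vol_def p_def[symmetric] G ..
  then have U: "unit_ball_vol d * real d = 2 * pi powr p / Gamma p"
    using p by (simp add: p_def field_simps)
  have "(\<rho>\<^sup>2 / v) powr (p - 1) * exp (- (\<rho>\<^sup>2 / v) / 2) / (2 powr p * Gamma p) * (2 * \<rho> / v)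
      = 2 * (\<rho> powr (2 * p - 2) * \<rho>) / (v powr (p - 1) * v) * exp (- \<rho>\<^sup>2 / (2 * v)) / (2 powr p * Gamma p)"
    unfolding A1 e using v by (simp add: field_simps)
  also have "\<dots> = 2 * \<rho> ^ (d - 1) / v powr p * exp (- \<rho>\<^sup>2 / (2 * v)) / (2 powr p * Gamma p)"
    unfolding A2 A3 ..
  also have "\<dots> = (2 * pi powr p / Gamma p) * \<rho> ^ (d - 1) * ((2 * pi * v) powr (- p) * exp (- \<rho>\<^sup>2 / (2 * v)))"
    unfolding A4 using vp pp tp Gp by (simp add: field_simps)
  also have "\<dots> = unit_ball_vol d * real d * \<rho> ^ (d - 1) * ((2 * pi * v) powr (- p) * exp (- \<rho>\<^sup>2 / (2 * v)))"
    by (simp only: U)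
  finally show ?thesis by (simp add: p_def)
qed


lemma nn_integral_Ici_SUP:
  fixes f :: "real \<Rightarrow> ennreal" and u :: "nat \<Rightarrow> real"
  assumes [measurable]: "f \<in> borel_measurable borel" and u: "incseq u" "\<And>x. \<exists>n. x \<le> u n"
  shows "(\<integral>\<^sup>+x. f x * indicator {a..} x \<partial>lborel) = (SUP n. \<integral>\<^sup>+x. f x * indicator {a..u n} x \<partial>lborel)"
proof -
  have "(SUP n. \<integral>\<^sup>+x. f x * indicator {a..u n} x \<partial>lborel) = (\<integral>\<^sup>+x. (SUP n. f x * indicator {a..u n} x) \<partial>lborel)"
  proof (rule nn_integral_monotone_convergence_SUP[symmetric])
    show "incseq (\<lambda>n x. f x * indicator {a..u n} x)"
      using u(1) by (auto simp: incseq_def le_fun_def mono_def split: split_indicator intro: order_trans)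
  qed auto
  also have "\<dots> = (\<integral>\<^sup>+x. f x * indicator {a..} x \<partial>lborel)"
  proof (intro nn_integral_cong antisym)
    fix x
    show "(SUP n. f x * indicator {a..u n} x) \<le> f x * indicator {a..} x"
      by (intro SUP_least) (auto split: split_indicator)
    obtain N where "x \<le> u N" using u(2) by blast
    then have "f x * indicator {a..} x = f x * indicator {a..u N} x"
      by (auto split: split_indicator)
    also have "\<dots> \<le> (SUP n. f x * indicator {a..u n} x)" by (rule SUP_upper) auto
    finally show "f x * indicator {a..} x \<le> (SUP n. f x * indicator {a..u n} x)" .
  qed
  finally show ?thesis ..
qed

lemma chi2_density_measurable[measurable]: "chi2_density k \<in> borel_measurable borel"
  unfolding chi2_density_def by measurable

lemma iso_gauss_density_measurable[measurable]: "iso_gauss_density mu v \<in> borel_measurable borel"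
  unfolding iso_gauss_density_def by measurable

lemma iso_gauss_tail:
  fixes R v :: real
  assumes v: "v > 0" and R: "R > 0"
  shows "emeasure (iso_gauss (0::'a::euclidean_space) v) {x. norm x > R} = emeasure (chi2 DIM('a)) {R\<^sup>2 / v <..}"
proof -
  define d where "d = DIM('a)"
  have d1: "d \<ge> 1" unfolding d_def by (simp add: DIM_positive Suc_leI)
  define H where "H = (\<lambda>\<rho>::real. ennreal ((2 * pi * v) powr (- real d / 2) * exp (- \<rho>\<^sup>2 / (2 * v))) * indicator {R<..} \<rho>)"
  define k where "k = (\<lambda>\<rho>::real. unit_ball_vol d * real d * \<rho> ^ (d - 1) * ((2 * pi * v) powr (- real d / 2) * exp (- \<rho>\<^sup>2 / (2 * v))))"
  define g where "g = (\<lambda>\<rho>::real. \<rho>\<^sup>2 / v)"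
  have [measurable]: "H \<in> borel_measurable borel" unfolding H_def by measurable
  have "emeasure (iso_gauss (0::'a) v) {x. norm x > R} = (\<integral>\<^sup>+x. ennreal (iso_gauss_density 0 v x) * indicator {x. norm x > R} x \<partial>(lborel::'a measure))"
    unfolding iso_gauss_def by (rule emeasure_density) auto
  also have "\<dots> = (\<integral>\<^sup>+x. H (norm x) \<partial>(lborel::'a measure))"
    by (intro nn_integral_cong) (simp add: H_def iso_gauss_density_def d_def split: split_indicator)
  also have "\<dots> = (\<integral>\<^sup>+\<rho>. H \<rho> \<partial>distr (lborel::'a measure) borel norm)"
    by (subst nn_integral_distr) auto
  also have "\<dots> = (\<integral>\<^sup>+\<rho>. ennreal (indicator {0..} \<rho> * (unit_ball_vol d * real d * \<rho> ^ (d - 1))) * H \<rho> \<partial>lborel)"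
    unfolding distr_norm_lborel d_def by (subst nn_integral_density) auto
  also have "\<dots> = (\<integral>\<^sup>+\<rho>. ennreal (k \<rho>) * indicator {R..} \<rho> \<partial>lborel)"
  proof (rule nn_integral_cong_AE)
    have "AE \<rho> in lborel. \<rho> \<noteq> R" by (rule AE_lborel_singleton)
    then show "AE \<rho> in lborel. ennreal (indicator {0..} \<rho> * (unit_ball_vol d * real d * \<rho> ^ (d - 1))) * H \<rho> = ennreal (k \<rho>) * indicator {R..} \<rho>"
      by eventually_elim (use R in \<open>auto simp: H_def k_def ennreal_mult'[symmetric] split: split_indicator\<close>)
  qed
  also have "\<dots> = (SUP n. \<integral>\<^sup>+\<rho>. ennreal (k \<rho>) * indicator {R..R + real n} \<rho> \<partial>lborel)"
  proof (rule nn_integral_Ici_SUP)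
    show "\<exists>n. x \<le> R + real n" for x
    proof -
      obtain n :: nat where "x - R \<le> real n" using real_arch_simple by blast
      then show ?thesis by (intro exI[of _ n]) simp
    qed
  qed (auto simp: k_def incseq_def)
  also have "\<dots> = (SUP n. \<integral>\<^sup>+s. ennreal (chi2_density d s * indicator {g R..g (R + real n)} s) \<partial>lborel)"
  proof (intro SUP_cong refl)
    fix n :: nat
    have "(\<integral>\<^sup>+s. ennreal (chi2_density d s * indicator {g R..g (R + real n)} s) \<partial>lborel)
        = (\<integral>\<^sup>+\<rho>. ennreal (chi2_density d (g \<rho>) * (2 * \<rho> / v) * indicator {R..R + real n} \<rho>) \<partial>lborel)"
    proof (rule nn_integral_substitution)
      show "set_borel_measurable borel {g R..g (R + real n)} (chi2_density d)"
        unfolding set_borel_measurable_def by measurable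
      show "(g has_real_derivative 2 * \<rho> / v) (at \<rho>)" for \<rho>
        unfolding g_def using v by (auto intro!: derivative_eq_intros)
      show "continuous_on {R..R + real n} (\<lambda>\<rho>. 2 * \<rho> / v)"
        using v by (intro continuous_intros) auto
      show "0 \<le> 2 * \<rho> / v" if "\<rho> \<in> {R..R + real n}" for \<rho>
        using that R v by auto
    qed auto
    also have "\<dots> = (\<integral>\<^sup>+\<rho>. ennreal (k \<rho>) * indicator {R..R + real n} \<rho> \<partial>lborel)"
    proof (intro nn_integral_cong)
      fix \<rho> :: real
      show "ennreal (chi2_density d (g \<rho>) * (2 * \<rho> / v) * indicator {R..R + real n} \<rho>) = ennreal (k \<rho>) * indicator {R..R + real n} \<rho>"
      proof (cases "\<rho> \<in> {R..R + real n}")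
        case True
        then have \<rho>: "\<rho> > 0" using R by auto
        then have "g \<rho> > 0" using v by (simp add: g_def)
        then show ?thesis using True chi2_subst_identity[OF d1 v \<rho>]
          by (simp add: chi2_density_def k_def g_def)
      qed simp
    qed
    finally show "(\<integral>\<^sup>+\<rho>. ennreal (k \<rho>) * indicator {R..R + real n} \<rho> \<partial>lborel) =
        (\<integral>\<^sup>+s. ennreal (chi2_density d s * indicator {g R..g (R + real n)} s) \<partial>lborel)" ..
  qed
  also have "\<dots> = (SUP n. \<integral>\<^sup>+s. ennreal (chi2_density d s) * indicator {g R..g (R + real n)} s \<partial>lborel)"
    by (intro SUP_cong refl nn_integral_cong) (simp split: split_indicator)
  also have "\<dots> = (\<integral>\<^sup>+s. ennreal (chi2_density d s) * indicator {g R..} s \<partial>lborel)"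
  proof (rule nn_integral_Ici_SUP[symmetric])
    show "incseq (\<lambda>n. g (R + real n))"
      using R v unfolding g_def incseq_def by (auto intro!: divide_right_mono power_mono)
    show "\<exists>n. x \<le> g (R + real n)" for x
    proof -
      obtain n :: nat where n: "max 1 (x * v) \<le> real n" using real_arch_simple by blast
      have "x * v \<le> real n" using n by simp
      also have "real n \<le> (R + real n)\<^sup>2"
      proof -
        have 1: "1 \<le> R + real n" using R n by simp
        have "real n \<le> (R + real n)" using R by simp
        also have "\<dots> \<le> (R + real n) * (R + real n)" using 1 by simp
        finally show ?thesis by (simp add: power2_eq_square)
      qed
      finally show ?thesis using v by (auto simp: g_def field_simps intro!: exI[of _ n])
    qed
  qed auto
  also have "\<dots> = emeasure (chi2 DIM('a)) {R\<^sup>2 / v <..}"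
  proof -
    have "AE s in lborel. s \<noteq> g R" by (rule AE_lborel_singleton)
    then show ?thesis
      unfolding chi2_def d_def[symmetric]
      by (subst emeasure_density) (auto simp: g_def intro!: nn_integral_cong_AE split: split_indicator)
  qed
  finally show ?thesis .
qed





lemma norm_sum_Basis_sq:
  "(norm (\<Sum>b\<in>Basis. f b *\<^sub>R b :: 'a::euclidean_space))\<^sup>2 = (\<Sum>b\<in>Basis. (f b)\<^sup>2)"
proof -
  have c: "(\<Sum>b\<in>Basis. f b *\<^sub>R b :: 'a) \<bullet> c = f c" if "c \<in> Basis" for c
    using that by (simp add: inner_sum_left inner_Basis if_distrib cong: if_cong)
  have "norm (\<Sum>b\<in>Basis. f b *\<^sub>R b :: 'a) = dist 0 (\<Sum>b\<in>Basis. f b *\<^sub>R b :: 'a)" by simp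
  also have "\<dots> = L2_set (\<lambda>i. dist (0 \<bullet> i) ((\<Sum>b\<in>Basis. f b *\<^sub>R b :: 'a) \<bullet> i)) Basis"
    by (rule euclidean_dist_l2)
  also have "\<dots> = sqrt (\<Sum>b\<in>Basis. (f b)\<^sup>2)"
    unfolding L2_set_def by (intro arg_cong[where f=sqrt] sum.cong refl) (simp add: c dist_real_def)
  finally show ?thesis by (simp add: sum_nonneg)
qed

lemma indicator_PiE_prod:
  fixes f :: "'i \<Rightarrow> 'b"
  assumes "finite I" "f \<in> extensional I"
  shows "(indicator (Pi\<^sub>E I A) f :: ennreal) = (\<Prod>i\<in>I. indicator (A i) (f i))"
proof (cases "\<forall>i\<in>I. f i \<in> A i")
  case True
  then show ?thesis using assms by (simp add: indicator_def PiE_iff)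
next
  case False
  then obtain i where "i \<in> I" "f i \<notin> A i" by auto
  then show ?thesis using assms by (auto simp: indicator_def PiE_iff intro!: prod_zero)
qed

lemma iso_gauss_prod:
  assumes v: "v > 0"
  shows "iso_gauss (0::'a::euclidean_space) v =
    distr (PiM Basis (\<lambda>_. density lborel (normal_density 0 (sqrt v)))) borel (\<lambda>f. \<Sum>b\<in>Basis. f b *\<^sub>R b)"
proof -
  let ?N = "density lborel (\<lambda>t. ennreal (normal_density 0 (sqrt v) t))"
  let ?PL = "PiM (Basis::'a set) (\<lambda>_. lborel::real measure)"
  let ?\<Phi> = "\<lambda>f. \<Sum>b\<in>Basis. f b *\<^sub>R b :: 'a"
  have [measurable]: "?\<Phi> \<in> measurable ?PL borel" by measurable
  have pt: "ennreal (iso_gauss_density 0 v (?\<Phi> f)) = (\<Prod>b\<in>Basis. ennreal (normal_density 0 (sqrt v) (f b)))" for f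
  proof -
    have "(\<Prod>b\<in>Basis. normal_density 0 (sqrt v) (f b)) = (\<Prod>b\<in>(Basis::'a set). (2 * pi * v) powr (-1/2) * exp (- (f b)\<^sup>2 / (2 * v)))"
    proof (intro prod.cong refl)
      fix b :: 'a
      have "1 / sqrt (2 * pi * (sqrt v)\<^sup>2) = (2 * pi * v) powr (-1/2)"
        using v by (simp add: powr_minus_divide powr_half_sqrt)
      then show "normal_density 0 (sqrt v) (f b) = (2 * pi * v) powr (-1/2) * exp (- (f b)\<^sup>2 / (2 * v))"
        using v by (simp add: normal_density_def)
    qed
    also have "\<dots> = ((2 * pi * v) powr (-1/2)) ^ DIM('a) * exp (- (\<Sum>b\<in>Basis. (f b)\<^sup>2) / (2 * v))"
      by (simp add: prod.distrib exp_sum[symmetric] sum_divide_distrib[symmetric] sum_negf)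
    also have "((2 * pi * v) powr (-1/2)) ^ DIM('a) = (2 * pi * v) powr (- real DIM('a) / 2)"
      using v by (simp add: powr_realpow[symmetric] powr_powr)
    finally show ?thesis
      by (simp add: iso_gauss_density_def norm_sum_Basis_sq prod_ennreal)
  qed
  have eqP: "density ?PL (\<lambda>f. ennreal (iso_gauss_density 0 v (?\<Phi> f))) = PiM Basis (\<lambda>_. ?N)"
  proof (rule product_sigma_finite.PiM_eqI)
    show "product_sigma_finite (\<lambda>_::'a. ?N)"
      unfolding product_sigma_finite_def
      using prob_space_normal_density[of "sqrt v" 0] v by (simp add: prob_space_imp_sigma_finite)
    show "sets (density ?PL (\<lambda>f. ennreal (iso_gauss_density 0 v (?\<Phi> f)))) = sets (PiM Basis (\<lambda>_. ?N))"
      unfolding sets_density by (intro sets_PiM_cong) auto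
    fix A :: "'a \<Rightarrow> real set" assume A: "\<And>i. i \<in> Basis \<Longrightarrow> A i \<in> sets ?N"
    have "emeasure (density ?PL (\<lambda>f. ennreal (iso_gauss_density 0 v (?\<Phi> f)))) (Pi\<^sub>E Basis A)
        = (\<integral>\<^sup>+f. (\<Prod>b\<in>Basis. ennreal (normal_density 0 (sqrt v) (f b)) * indicator (A b) (f b)) \<partial>?PL)"
    proof -
      have "Pi\<^sub>E Basis A \<in> sets ?PL" using A by (intro sets_PiM_I_finite) auto
      then have "emeasure (density ?PL (\<lambda>f. ennreal (iso_gauss_density 0 v (?\<Phi> f)))) (Pi\<^sub>E Basis A)
          = (\<integral>\<^sup>+f. ennreal (iso_gauss_density 0 v (?\<Phi> f)) * indicator (Pi\<^sub>E Basis A) f \<partial>?PL)"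
        by (rule emeasure_density[rotated]) measurable
      also have "\<dots> = (\<integral>\<^sup>+f. (\<Prod>b\<in>Basis. ennreal (normal_density 0 (sqrt v) (f b)) * indicator (A b) (f b)) \<partial>?PL)"
      proof (rule nn_integral_cong)
        fix f assume "f \<in> space ?PL"
        then have "f \<in> extensional Basis" by (simp add: space_PiM PiE_def)
        then show "ennreal (iso_gauss_density 0 v (?\<Phi> f)) * indicator (Pi\<^sub>E Basis A) f
            = (\<Prod>b\<in>Basis. ennreal (normal_density 0 (sqrt v) (f b)) * indicator (A b) (f b))"
          by (simp only: pt indicator_PiE_prod[OF finite_Basis] prod.distrib)
      qed
      finally show ?thesis .
    qed
    also have "\<dots> = (\<Prod>b\<in>Basis. \<integral>\<^sup>+t. ennreal (normal_density 0 (sqrt v) t) * indicator (A b) t \<partial>lborel)"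
      using A prob_space_normal_density[of "sqrt v" 0] v
      by (subst product_sigma_finite.product_nn_integral_prod) (simp_all add: product_sigma_finite_def prob_space_imp_sigma_finite sigma_finite_lborel)
    also have "\<dots> = (\<Prod>b\<in>Basis. emeasure ?N (A b))"
      using A by (intro prod.cong refl) (simp add: emeasure_density)
    finally show "emeasure (density ?PL (\<lambda>f. ennreal (iso_gauss_density 0 v (?\<Phi> f)))) (Pi\<^sub>E Basis A) = (\<Prod>b\<in>Basis. emeasure ?N (A b))" .
  qed simp
  have "iso_gauss (0::'a) v = density (distr ?PL borel ?\<Phi>) (\<lambda>x. ennreal (iso_gauss_density 0 v x))"
    unfolding iso_gauss_def by (subst lborel_eq) rule
  also have "\<dots> = distr (density ?PL (\<lambda>f. ennreal (iso_gauss_density 0 v (?\<Phi> f)))) borel ?\<Phi>"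
    by (rule density_distr) auto
  also have "\<dots> = distr (PiM Basis (\<lambda>_. ?N)) borel ?\<Phi>"
    by (simp only: eqP)
  finally show ?thesis .
qed



lemma (in prob_space) std_normal_Phi:
  assumes "distributed M lborel Z std_normal_density"
  shows "prob {x \<in> space M. Z x \<le> t} = Phi t"
proof -
  have Z: "Z \<in> measurable M lborel" and D: "distr M lborel Z = density lborel std_normal_density"
    using assms by (auto simp: distributed_def)
  have "Phi t = measure (distr M lborel Z) {..t}"
    unfolding Phi_def cdf_def D ..
  also have "\<dots> = prob (Z -` {..t} \<inter> space M)"
    using Z by (subst measure_distr) auto
  finally show ?thesis by (simp add: vimage_def Int_def conj_commute)
qed

lemma iso_gauss_proj_bound:
  fixes \<theta> :: "'a::euclidean_space"
  assumes v: "v > 0" and \<theta>: "\<theta> \<noteq> 0" and a: "a > 0" and vth: "(norm \<theta>)\<^sup>2 \<le> v"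
  shows "2 * Phi (- a) \<le> measure (iso_gauss (0::'a) v) {x. a * (norm \<theta>)\<^sup>2 \<le> \<bar>x \<bullet> \<theta>\<bar>}"
proof -
  define N where "N = density lborel (\<lambda>t. ennreal (normal_density 0 (sqrt v) t))"
  define P where "P = PiM (Basis::'a set) (\<lambda>_. N)"
  define \<Phi> where "\<Phi> = (\<lambda>f. \<Sum>b\<in>Basis. f b *\<^sub>R b :: 'a)"
  have N: "prob_space N" unfolding N_def using prob_space_normal_density[of "sqrt v" 0] v by simp
  have sN: "sets N = sets borel" by (simp add: N_def)
  interpret P: prob_space P unfolding P_def by (rule prob_space_PiM) (rule N)
  have comp: "(\<lambda>f. f b) \<in> borel_measurable P" if "b \<in> Basis" for b
  proof -
    have "(\<lambda>f. f b) \<in> measurable P N" unfolding P_def using that by (rule measurable_component_singleton)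
    then show ?thesis using measurable_cong_sets[OF refl sN] by blast
  qed
  have [measurable]: "\<Phi> \<in> measurable P borel" unfolding \<Phi>_def
    by (intro borel_measurable_sum borel_measurable_scaleR comp measurable_const) auto
  have IG: "iso_gauss (0::'a) v = distr P borel \<Phi>"
    unfolding P_def N_def \<Phi>_def by (rule iso_gauss_prod[OF v])
  define I where "I = {b\<in>(Basis::'a set). b \<bullet> \<theta> \<noteq> 0}"
  have I: "finite I" "I \<noteq> {}" "I \<subseteq> Basis"
    using \<theta> by (auto simp: I_def) (metis euclidean_all_zero_iff inner_commute)
  define W where "W = (\<lambda>f. \<Sum>b\<in>I. (b \<bullet> \<theta>) * f b)"
  have PhiW: "\<Phi> f \<bullet> \<theta> = W f" for f
  proof -
    have "\<Phi> f \<bullet> \<theta> = (\<Sum>b\<in>Basis. f b * (b \<bullet> \<theta>))"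
      by (simp add: \<Phi>_def inner_sum_left)
    also have "\<dots> = (\<Sum>b\<in>I. f b * (b \<bullet> \<theta>))"
      by (rule sum.mono_neutral_right) (auto simp: I_def)
    finally show ?thesis by (simp add: W_def mult.commute)
  qed
  have coord: "distributed P lborel (\<lambda>f. f b) (normal_density 0 (sqrt v))" if "b \<in> Basis" for b
  proof -
    have "distr P lborel (\<lambda>f. f b) = distr P N (\<lambda>f. f b)"
      by (rule distr_cong) (auto simp: sN)
    also have "\<dots> = N" unfolding P_def using N that by (intro distr_PiM_component) auto
    finally show ?thesis unfolding distributed_def N_def[symmetric] using that
      by (auto simp: P_def N_def)
  qed
  have indep: "P.indep_vars (\<lambda>_. borel) (\<lambda>b f. f b) Basis"
  proof (subst P.indep_vars_iff_distr_eq_PiM')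
    show "Basis \<noteq> {}" by simp
    show "(\<lambda>f. f b) \<in> borel_measurable P" if "b \<in> Basis" for b
      using that by (rule comp)
    have "distr P (PiM Basis (\<lambda>_. borel)) (\<lambda>f. \<lambda>b\<in>Basis. f b) = distr P P (\<lambda>f. f)"
      by (rule distr_cong) (auto simp: P_def sN intro!: sets_PiM_cong simp: space_PiM PiE_def extensional_def restrict_def)
    also have "\<dots> = P" by simp
    also have "P = PiM Basis (\<lambda>b. distr P borel (\<lambda>f. f b))"
    proof -
      have "distr P borel (\<lambda>f. f b) = N" if "b \<in> Basis" for b
      proof -
        have "distr P borel (\<lambda>f. f b) = distr P N (\<lambda>f. f b)"
          by (rule distr_cong) (auto simp: sN)
        also have "\<dots> = N" unfolding P_def using N that by (intro distr_PiM_component) auto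
        finally show ?thesis .
      qed
      then show ?thesis unfolding P_def by (intro PiM_cong) auto
    qed
    finally show "distr P (PiM Basis (\<lambda>_. borel)) (\<lambda>f. \<lambda>b\<in>Basis. f b) = PiM Basis (\<lambda>b. distr P borel (\<lambda>f. f b))" .
  qed
  have indep2: "P.indep_vars (\<lambda>_. borel) (\<lambda>b f. (b \<bullet> \<theta>) * f b) I"
    using P.indep_vars_compose2[OF P.indep_vars_subset[OF indep I(3)], of "\<lambda>b x. (b \<bullet> \<theta>) * x" "\<lambda>_. borel"]
    by simp
  have Xd: "distributed P lborel (\<lambda>f. (b \<bullet> \<theta>) * f b) (normal_density 0 (\<bar>b \<bullet> \<theta>\<bar> * sqrt v))" if "b \<in> I" for b
    using P.normal_density_affine[OF coord, of b "b \<bullet> \<theta>" 0] that v by (auto simp: I_def)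
  define s where "s = sqrt (\<Sum>b\<in>I. (\<bar>b \<bullet> \<theta>\<bar> * sqrt v)\<^sup>2)"
  have Wd: "distributed P lborel W (normal_density 0 s)"
    using P.sum_indep_normal[OF I(1) I(2) indep2, of "\<lambda>b. \<bar>b \<bullet> \<theta>\<bar> * sqrt v" "\<lambda>_. 0"] Xd v
    by (auto simp: W_def s_def I_def)
  have sq: "(\<Sum>b\<in>I. (b \<bullet> \<theta>)\<^sup>2) = (norm \<theta>)\<^sup>2"
  proof -
    have "(\<Sum>b\<in>I. (b \<bullet> \<theta>)\<^sup>2) = (\<Sum>b\<in>Basis. (b \<bullet> \<theta>)\<^sup>2)"
      by (rule sum.mono_neutral_left) (auto simp: I_def)
    also have "\<dots> = (norm \<theta>)\<^sup>2"
    proof -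
      have "(\<Sum>b\<in>Basis. (b \<bullet> \<theta>) *\<^sub>R b) = \<theta>"
        using euclidean_representation[of \<theta>] by (simp add: inner_commute)
      then show ?thesis using norm_sum_Basis_sq[of "\<lambda>b. b \<bullet> \<theta>"] by simp
    qed
    finally show ?thesis .
  qed
  have s_eq: "s = sqrt v * norm \<theta>"
  proof -
    have "(\<Sum>b\<in>I. (\<bar>b \<bullet> \<theta>\<bar> * sqrt v)\<^sup>2) = v * (\<Sum>b\<in>I. (b \<bullet> \<theta>)\<^sup>2)"
      using v by (simp add: power_mult_distrib sum_distrib_left mult.commute)
    then show ?thesis unfolding s_def sq by (simp add: real_sqrt_mult)
  qed
  have s_pos: "s > 0" using v \<theta> s_eq by simp
  have Zd: "distributed P lborel (\<lambda>f. W f / s) std_normal_density"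
    using P.normal_standard_normal_convert[OF s_pos, of W 0] Wd by simp
  have Zd': "distributed P lborel (\<lambda>f. - (W f / s)) std_normal_density"
    using P.normal_density_affine[OF Zd, of "-1" 0] by simp
  have s_ge: "(norm \<theta>)\<^sup>2 \<le> s"
  proof -
    have "norm \<theta> \<le> sqrt v" using vth by (simp add: real_le_rsqrt)
    then show ?thesis unfolding s_eq power2_eq_square by (intro mult_right_mono) auto
  qed
  have "2 * Phi (- a) = P.prob {f \<in> space P. W f / s \<le> - a} + P.prob {f \<in> space P. - (W f / s) \<le> - a}"
    unfolding mult_2 using P.std_normal_Phi[OF Zd, of "-a"] P.std_normal_Phi[OF Zd', of "-a"] by (simp only:)
  also have "\<dots> = P.prob ({f \<in> space P. W f / s \<le> - a} \<union> {f \<in> space P. - (W f / s) \<le> - a})"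
  proof (rule P.finite_measure_Union[symmetric])
    show "{f \<in> space P. W f / s \<le> - a} \<in> P.events" "{f \<in> space P. - (W f / s) \<le> - a} \<in> P.events"
      using Zd by (auto simp: distributed_def)
    show "{f \<in> space P. W f / s \<le> - a} \<inter> {f \<in> space P. - (W f / s) \<le> - a} = {}"
      using a by auto
  qed
  also have "\<dots> \<le> P.prob {f \<in> space P. a * (norm \<theta>)\<^sup>2 \<le> \<bar>W f\<bar>}"
  proof (rule P.finite_measure_mono)
    show "{f \<in> space P. a * (norm \<theta>)\<^sup>2 \<le> \<bar>W f\<bar>} \<in> P.events"
      using Wd by (auto simp: distributed_def)
    show "{f \<in> space P. W f / s \<le> - a} \<union> {f \<in> space P. - (W f / s) \<le> - a} \<subseteq> {f \<in> space P. a * (norm \<theta>)\<^sup>2 \<le> \<bar>W f\<bar>}"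
    proof safe
      fix f assume "f \<in> space P"
      have h: "a * (norm \<theta>)\<^sup>2 \<le> a * s" using s_ge a by simp
      { assume "W f / s \<le> - a"
        then have "W f \<le> - a * s" using s_pos by (simp add: field_simps)
        then show "a * (norm \<theta>)\<^sup>2 \<le> \<bar>W f\<bar>" using h by linarith }
      { assume "- (W f / s) \<le> - a"
        then have "a * s \<le> W f" using s_pos by (simp add: field_simps)
        then show "a * (norm \<theta>)\<^sup>2 \<le> \<bar>W f\<bar>" using h by linarith }
    qed
  qed
  also have "\<dots> = measure (iso_gauss (0::'a) v) {x. a * (norm \<theta>)\<^sup>2 \<le> \<bar>x \<bullet> \<theta>\<bar>}"
    unfolding IG by (subst measure_distr) (auto simp: PhiW vimage_def Int_def conj_commute intro!: arg_cong2[where f=measure])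
  finally show ?thesis .
qed



lemma prob_space_iso_gauss0:
  assumes v: "v > 0"
  shows "prob_space (iso_gauss (0::'a::euclidean_space) v)"
proof -
  let ?N = "density lborel (\<lambda>t. ennreal (normal_density 0 (sqrt v) t))"
  have N: "prob_space ?N" using prob_space_normal_density[of "sqrt v" 0] v by simp
  interpret P: prob_space "PiM (Basis::'a set) (\<lambda>_. ?N)" by (rule prob_space_PiM) (rule N)
  have m: "(\<lambda>f. \<Sum>b\<in>Basis. f b *\<^sub>R b :: 'a) \<in> borel_measurable (PiM (Basis::'a set) (\<lambda>_. ?N))"
  proof -
    have comp: "(\<lambda>f. f b) \<in> borel_measurable (PiM (Basis::'a set) (\<lambda>_. ?N))" if "b \<in> Basis" for b
    proof -
      have "(\<lambda>f. f b) \<in> measurable (PiM (Basis::'a set) (\<lambda>_. ?N)) ?N" using that by (rule measurable_component_singleton)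
      then show ?thesis using measurable_cong_sets[OF refl, of ?N borel] by simp
    qed
    show ?thesis by (intro borel_measurable_sum borel_measurable_scaleR comp measurable_const) auto
  qed
  show ?thesis unfolding iso_gauss_prod[OF v] by (rule P.prob_space_distr[OF m])
qed

lemma prob_space_iso_gauss:
  assumes v: "v > 0"
  shows "prob_space (iso_gauss (mu::'a::euclidean_space) v)"
proof
  interpret G: prob_space "iso_gauss (0::'a) v" by (rule prob_space_iso_gauss0[OF v])
  have "emeasure (iso_gauss mu v) (space (iso_gauss mu v)) = (\<integral>\<^sup>+x. ennreal (iso_gauss_density mu v x) \<partial>lborel)"
    unfolding iso_gauss_def by (subst emeasure_density) auto
  also have "\<dots> = (\<integral>\<^sup>+x. ennreal (iso_gauss_density 0 v ((- mu) + x)) \<partial>lborel)"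
    by (intro nn_integral_cong) (simp add: iso_gauss_density_def)
  also have "\<dots> = (\<integral>\<^sup>+x. ennreal (iso_gauss_density 0 v x) \<partial>distr lborel borel (\<lambda>x. (- mu) + x))"
    by (subst nn_integral_distr) auto
  also have "distr lborel borel (\<lambda>x. (- mu) + x) = lborel"
    using lborel_affine[of 1 "- mu"] by (simp add: density_1)
  also have "(\<integral>\<^sup>+x. ennreal (iso_gauss_density 0 v x) \<partial>(lborel::'a measure)) = emeasure (iso_gauss (0::'a) v) (space (iso_gauss (0::'a) v))"
    unfolding iso_gauss_def by (subst emeasure_density) auto
  also have "\<dots> = 1" by (rule G.emeasure_space_1)
  finally show "emeasure (iso_gauss mu v) (space (iso_gauss mu v)) = 1" .
qed

lemma sets_sym_mixture[measurable_cong, simp]: "sets (sym_mixture theta sg) = sets borel"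
  by (simp add: sym_mixture_def)

lemma prob_space_sym_mixture:
  assumes sg: "sg > 0"
  shows "prob_space (sym_mixture (theta::'a::euclidean_space) sg)"
proof
  have v: "sg\<^sup>2 > 0" using sg by simp
  interpret G1: prob_space "iso_gauss theta (sg\<^sup>2)" by (rule prob_space_iso_gauss[OF v])
  interpret G2: prob_space "iso_gauss (- theta) (sg\<^sup>2)" by (rule prob_space_iso_gauss[OF v])
  have e: "(\<integral>\<^sup>+x. ennreal (iso_gauss_density m (sg\<^sup>2) x) \<partial>lborel) = 1" for m :: 'a
  proof -
    interpret G: prob_space "iso_gauss m (sg\<^sup>2)" by (rule prob_space_iso_gauss[OF v])
    have "emeasure (iso_gauss m (sg\<^sup>2)) (space (iso_gauss m (sg\<^sup>2))) = (\<integral>\<^sup>+x. ennreal (iso_gauss_density m (sg\<^sup>2) x) \<partial>lborel)"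
      unfolding iso_gauss_def by (subst emeasure_density) auto
    then show ?thesis using G.emeasure_space_1 by simp
  qed
  have nn: "0 \<le> iso_gauss_density m s x" if "s > 0" for m x :: 'a and s :: real
    using that by (simp add: iso_gauss_density_def)
  have "emeasure (sym_mixture theta sg) (space (sym_mixture theta sg))
      = (\<integral>\<^sup>+x. ennreal (1/2 * iso_gauss_density theta (sg\<^sup>2) x) + ennreal (1/2 * iso_gauss_density (- theta) (sg\<^sup>2) x) \<partial>lborel)"
  proof -
    have "emeasure (sym_mixture theta sg) (space (sym_mixture theta sg))
      = (\<integral>\<^sup>+x. ennreal (1/2 * iso_gauss_density theta (sg\<^sup>2) x + 1/2 * iso_gauss_density (- theta) (sg\<^sup>2) x) \<partial>lborel)"
      unfolding sym_mixture_def by (subst emeasure_density) auto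
    also have "\<dots> = (\<integral>\<^sup>+x. ennreal (1/2 * iso_gauss_density theta (sg\<^sup>2) x) + ennreal (1/2 * iso_gauss_density (- theta) (sg\<^sup>2) x) \<partial>lborel)"
    proof (rule nn_integral_cong)
      fix x :: 'a
      show "ennreal (1/2 * iso_gauss_density theta (sg\<^sup>2) x + 1/2 * iso_gauss_density (- theta) (sg\<^sup>2) x) = ennreal (1/2 * iso_gauss_density theta (sg\<^sup>2) x) + ennreal (1/2 * iso_gauss_density (- theta) (sg\<^sup>2) x)"
        by (rule ennreal_plus) (simp_all add: nn[OF v])
    qed
    finally show ?thesis .
  qed
  also have "\<dots> = (\<integral>\<^sup>+x. ennreal (1/2) * ennreal (iso_gauss_density theta (sg\<^sup>2) x) \<partial>lborel) + (\<integral>\<^sup>+x. ennreal (1/2) * ennreal (iso_gauss_density (- theta) (sg\<^sup>2) x) \<partial>lborel)"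
  proof -
    have "(\<integral>\<^sup>+x. ennreal (1/2 * iso_gauss_density theta (sg\<^sup>2) x) + ennreal (1/2 * iso_gauss_density (- theta) (sg\<^sup>2) x) \<partial>lborel)
       = (\<integral>\<^sup>+x. ennreal (1/2 * iso_gauss_density theta (sg\<^sup>2) x) \<partial>lborel) + (\<integral>\<^sup>+x. ennreal (1/2 * iso_gauss_density (- theta) (sg\<^sup>2) x) \<partial>lborel)"
      by (rule nn_integral_add) auto
    also have "\<dots> = (\<integral>\<^sup>+x. ennreal (1/2) * ennreal (iso_gauss_density theta (sg\<^sup>2) x) \<partial>lborel) + (\<integral>\<^sup>+x. ennreal (1/2) * ennreal (iso_gauss_density (- theta) (sg\<^sup>2) x) \<partial>lborel)"
      by (intro arg_cong2[where f="(+)"] nn_integral_cong ennreal_mult) (simp_all add: nn[OF v])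
    finally show ?thesis .
  qed
  also have "\<dots> = ennreal (1/2) * 1 + ennreal (1/2) * 1"
    by (simp add: nn_integral_cmult e)
  also have "\<dots> = ennreal (1/2 + 1/2)" by (subst ennreal_plus) auto
  also have "\<dots> = 1" by simp
  finally show "emeasure (sym_mixture theta sg) (space (sym_mixture theta sg)) = 1" .
qed



lemma chi2_tail_finite:
  assumes "t > 0"
  shows "emeasure (chi2 DIM('a::euclidean_space)) {t <..} < \<infinity>"
proof -
  interpret G: prob_space "iso_gauss (0::'a) 1" by (rule prob_space_iso_gauss0) simp
  have "emeasure (chi2 DIM('a)) {t <..} = emeasure (iso_gauss (0::'a) 1) {x. norm x > sqrt t}"
    using iso_gauss_tail[of 1 "sqrt t", where 'a='a] assms by simp
  also have "\<dots> < \<infinity>" by (simp add: less_top[symmetric])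
  finally show ?thesis .
qed

lemma key_bound:
  fixes theta :: "'a::euclidean_space" and v a r :: real
  assumes th: "theta \<noteq> 0" and a: "0 < a" and r: "r \<ge> 1"
    and v1: "(norm theta)\<^sup>2 \<le> v" and v2: "v \<le> 2 * (norm theta)\<^sup>2"
  shows "2 * Phi (- a) - measure (chi2 DIM('a)) {r\<^sup>2 / 2 <..} \<le> measure (iso_gauss (0::'a) v) (D_tilde theta a r)"
proof -
  have nt: "norm theta > 0" using th by simp
  have v: "v > 0" using v1 nt by (smt (verit) zero_less_power)
  interpret G: prob_space "iso_gauss (0::'a) v" by (rule prob_space_iso_gauss0[OF v])
  define A where "A = {x::'a. a * (norm theta)\<^sup>2 \<le> \<bar>x \<bullet> theta\<bar>}"
  define C where "C = {x::'a. norm x > r * norm theta}"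
  have sG: "sets (iso_gauss (0::'a) v) = sets borel" by (simp add: iso_gauss_def)
  have [simp]: "A \<in> G.events" "C \<in> G.events" "D_tilde theta a r \<in> G.events"
    unfolding sG A_def C_def D_tilde_def by measurable
  have "A \<subseteq> D_tilde theta a r \<union> C"
    unfolding A_def C_def D_tilde_def by auto
  then have "G.prob A \<le> G.prob (D_tilde theta a r \<union> C)"
    by (intro G.finite_measure_mono) auto
  also have "\<dots> \<le> G.prob (D_tilde theta a r) + G.prob C"
    by (rule measure_Un_le) auto
  finally have 1: "G.prob A \<le> G.prob (D_tilde theta a r) + G.prob C" .
  have 2: "2 * Phi (- a) \<le> G.prob A"
    unfolding A_def by (rule iso_gauss_proj_bound[OF v th a v1])
  have R: "r * norm theta > 0" using r nt by simp
  have "G.prob C = enn2real (emeasure (chi2 DIM('a)) {(r * norm theta)\<^sup>2 / v <..})"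
    unfolding C_def measure_def using iso_gauss_tail[OF v R, where 'a='a] by simp
  also have "\<dots> \<le> enn2real (emeasure (chi2 DIM('a)) {r\<^sup>2 / 2 <..})"
  proof (rule enn2real_mono)
    have "r\<^sup>2 / 2 \<le> (r * norm theta)\<^sup>2 / v"
    proof -
      have "r\<^sup>2 * v \<le> r\<^sup>2 * (2 * (norm theta)\<^sup>2)" using v2 by (intro mult_left_mono) auto
      then show ?thesis using v by (simp add: field_simps power_mult_distrib)
    qed
    then show "emeasure (chi2 DIM('a)) {(r * norm theta)\<^sup>2 / v <..} \<le> emeasure (chi2 DIM('a)) {r\<^sup>2 / 2 <..}"
      by (intro emeasure_mono) (auto simp: chi2_def)
    have "emeasure (chi2 DIM('a)) {r\<^sup>2 / 2 <..} < \<infinity>"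
      using r by (intro chi2_tail_finite) simp
    then show "emeasure (chi2 DIM('a)) {r\<^sup>2 / 2 <..} < top" by simp
  qed
  finally have 3: "G.prob C \<le> measure (chi2 DIM('a)) {r\<^sup>2 / 2 <..}" by (simp add: measure_def)
  show ?thesis using 1 2 3 by linarith
qed



theorem proposition2:
  fixes theta :: "'a::euclidean_space" and sg a r :: real and n :: nat
  assumes "sg > 0" and "theta \<noteq> 0"
    and "norm theta / sg \<ge> 1"
    and "0 < a" and "a < 1" and "r \<ge> 1"
  shows "measure (theta0_law n theta sg) (D_tilde theta a r) \<ge>
     (2 * Phi (- a) - measure (chi2 DIM('a)) {r\<^sup>2 / 2 <..}) *
     measure (sample_law n theta sg)
        {Y \<in> space (sample_law n theta sg). \<bar>T_hat n sg Y - (norm theta)\<^sup>2\<bar> < sg\<^sup>2 / 2}"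
proof -
  note sg = \<open>sg > 0\<close> and th = \<open>theta \<noteq> 0\<close> and a = \<open>0 < a\<close> and r = \<open>r \<ge> 1\<close>
  have thsg: "sg \<le> norm theta" using \<open>norm theta / sg \<ge> 1\<close> sg by (simp add: field_simps)
  define S where "S = sample_law n theta sg"
  define c where "c = sg\<^sup>2 / 2"
  define V where "V = (\<lambda>Y::nat \<Rightarrow> 'a. T_hat_plus n sg Y + c)"
  define K where "K = (\<lambda>Y. iso_gauss (0::'a) (V Y))"
  define D where "D = D_tilde theta a r"
  define E where "E = {Y \<in> space S. \<bar>T_hat n sg Y - (norm theta)\<^sup>2\<bar> < sg\<^sup>2 / 2}"
  define q where "q = 2 * Phi (- a) - measure (chi2 DIM('a)) {r\<^sup>2 / 2 <..}"
  have law: "theta0_law n theta sg = S \<bind> K"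
    unfolding theta0_law_def S_def K_def V_def c_def ..
  have c: "c > 0" using sg by (simp add: c_def)
  have Vc: "c \<le> V Y" for Y by (simp add: V_def T_hat_plus_def)
  interpret S: prob_space S unfolding S_def sample_law_def
    by (rule prob_space_PiM) (rule prob_space_sym_mixture[OF sg])
  have Vm: "V \<in> borel_measurable S"
    unfolding V_def T_hat_plus_def T_hat_def S_def sample_law_def by measurable
  define Gk where "Gk = (\<lambda>w. iso_gauss (0::'a) (max w c))"
  have Gm: "Gk \<in> measurable borel (subprob_algebra lborel)"
  proof (rule measurable_subprob_algebra)
    fix w :: real
    show "subprob_space (Gk w)" unfolding Gk_def
      using c by (intro prob_space_imp_subprob_space prob_space_iso_gauss0) auto
    show "sets (Gk w) = sets lborel" by (simp add: Gk_def iso_gauss_def)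
  next
    fix A :: "'a set" assume A[measurable]: "A \<in> sets lborel"
    have "(\<lambda>w. emeasure (Gk w) A) = (\<lambda>w. \<integral>\<^sup>+x. ennreal (iso_gauss_density 0 (max w c) x) * indicator A x \<partial>lborel)"
      using A by (simp add: Gk_def iso_gauss_def emeasure_density)
    also have "\<dots> \<in> borel_measurable borel"
      unfolding iso_gauss_density_def by measurable
    finally show "(\<lambda>w. emeasure (Gk w) A) \<in> borel_measurable borel" .
  qed
  have Km: "K \<in> measurable S (subprob_algebra lborel)"
  proof -
    have "(\<lambda>Y. Gk (V Y)) \<in> measurable S (subprob_algebra lborel)"
      by (rule measurable_compose[OF Vm Gm])
    moreover have "Gk (V Y) = K Y" for Y using Vc[of Y] by (simp add: Gk_def K_def max_def)
    ultimately show ?thesis by simp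
  qed
  have Dm: "D \<in> sets lborel" unfolding D_def D_tilde_def by measurable
  have Em: "E \<in> sets S"
    unfolding E_def S_def sample_law_def T_hat_def by measurable
  have key: "q \<le> measure (K Y) D" if "Y \<in> E" for Y
  proof -
    let ?T = "T_hat n sg Y"
    have T: "\<bar>?T - (norm theta)\<^sup>2\<bar> < sg\<^sup>2 / 2" using that by (simp add: E_def)
    have sq: "sg\<^sup>2 \<le> (norm theta)\<^sup>2" using thsg sg by (intro power_mono) auto
    have s2: "sg\<^sup>2 > 0" using sg by simp
    have Tl: "(norm theta)\<^sup>2 - sg\<^sup>2 / 2 < ?T" "?T < (norm theta)\<^sup>2 + sg\<^sup>2 / 2" using T by (simp_all only: abs_less_iff) linarith+
    have Tpos: "?T > 0" using Tl sq s2 by linarith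
    have VY: "V Y = ?T + sg\<^sup>2 / 2" using Tpos by (simp add: V_def T_hat_plus_def c_def)
    have v1: "(norm theta)\<^sup>2 \<le> V Y" using VY Tl by linarith
    have v2: "V Y \<le> 2 * (norm theta)\<^sup>2" using VY Tl sq by linarith
    show ?thesis unfolding q_def K_def D_def by (rule key_bound[OF th a r v1 v2])
  qed
  have "q * measure S E \<le> measure (S \<bind> K) D"
  proof (cases "q \<le> 0")
    case True
    then have "q * measure S E \<le> 0" by (simp add: mult_nonpos_nonneg)
    also have "0 \<le> measure (S \<bind> K) D" by (rule measure_nonneg)
    finally show ?thesis .
  next
    case False
    then have q: "q > 0" by simp
    interpret B: subprob_space "S \<bind> K" by (rule subprob_space_bind[OF _ Km]) (rule prob_space_imp_subprob_space, rule S.prob_space_axioms)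
    have "ennreal (q * measure S E) = ennreal q * emeasure S E"
      using q by (simp add: S.emeasure_eq_measure ennreal_mult)
    also have "\<dots> = (\<integral>\<^sup>+Y. ennreal q * indicator E Y \<partial>S)"
      using Em by (simp add: nn_integral_cmult_indicator)
    also have "\<dots> \<le> (\<integral>\<^sup>+Y. emeasure (K Y) D \<partial>S)"
    proof (rule nn_integral_mono)
      fix Y assume Y: "Y \<in> space S"
      show "ennreal q * indicator E Y \<le> emeasure (K Y) D"
      proof (cases "Y \<in> E")
        case True
        interpret KY: prob_space "K Y" unfolding K_def
          using c Vc[of Y] by (intro prob_space_iso_gauss0) auto
        show ?thesis using key[OF True] True by (simp add: KY.emeasure_eq_measure)
      qed simp
    qed
    also have "\<dots> = emeasure (S \<bind> K) D"
      by (rule emeasure_bind[symmetric, OF S.not_empty Km Dm])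
    also have "\<dots> = ennreal (measure (S \<bind> K) D)" by (rule B.emeasure_eq_measure)
    finally show ?thesis by (subst (asm) ennreal_le_iff) auto
  qed
  then show ?thesis unfolding law q_def D_def E_def S_def by simp
qed


end
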